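(* Let $p$ be an odd prime, $\mathbb{F}$ a field of characteristic $p$, and $a,s$ natural numbers with $a<p$. For every set partition $\delta$ of $\{1,\ldots,as\}$ into $s$ sets of size $a$, there exists $g\in N_{S_{asp}}(R_{as})$ such that $K_\delta\cong\mathbb{F}\uparrow_{E_s^g}^C$ as $\mathbb{F}C$-modules.
   Context: For $j\geq1$ let $z_j=(p(j-1)+1,\ldots,pj)$ and $\mathcal{O}_j=\{p(j-1)+1,\ldots,pj\}$; $\sigma=z_1\cdots z_{as}$, $R_{as}=\langle\sigma\rangle$, $C=\langle z_1\rangle\times\cdots\times\langle z_{as}\rangle$. For $j\in\{1,\ldots,s\}$ let $\pi_j=z_jz_{j+s}z_{j+2s}\cdots z_{j+(a-1)s}$ and $E_s=\langle\pi_1\rangle\times\cdots\times\langle\pi_s\rangle\leq C$. $H^{(a^{sp})}$ is the $\mathbb{F}S_{asp}$-permutation module on set partitions of $\{1,\ldots,asp\}$ into $sp$ sets of size $a$; its Brauer quotient $H^{(a^{sp})}(R_{as})$ is identified with the span of the set partitions fixed by $R_{as}$. A fixed set partition $\omega$ has type $\delta=\{\delta_1,\ldots,\delta_s\}$ if there are sets $A_1,\ldots,A_s$ with $|A_i\cap\mathcal{O}_j|=1$ if $j\in\delta_i$ and $0$ otherwise, and $\omega=\{A_i\sigma^k:1\leq i\leq s,0\leq k\leq p-1\}$; $K_\delta$ is the $\mathbb{F}C$-submodule spanned by fixed set partitions of type $\delta$. *)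

theory Defs
  imports Main "HOL-Library.Disjoint_Sets" "HOL-Combinatorics.Permutations" "HOL-Computational_Algebra.Primes"
begin

text \<open>Permutations of {1..n} are functions nat => nat (composition = product).\<close>

definition zcyc :: "nat \<Rightarrow> nat \<Rightarrow> nat \<Rightarrow> nat" where
  "zcyc p j = (\<lambda>i. if p*(j-1)+1 \<le> i \<and> i < p*j then i+1
                    else if i = p*j then p*(j-1)+1 else i)"

definition Orb :: "nat \<Rightarrow> nat \<Rightarrow> nat set" where
  "Orb p j = {p*(j-1)+1..p*j}"

definition sigma :: "nat \<Rightarrow> nat \<Rightarrow> nat \<Rightarrow> nat \<Rightarrow> nat" where
  "sigma p a s = foldr (\<lambda>j f. zcyc p j \<circ> f) [1..<a*s+1] id"

definition Rgrp :: "nat \<Rightarrow> nat \<Rightarrow> nat \<Rightarrow> (nat \<Rightarrow> nat) set" where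
  "Rgrp p a s = range (\<lambda>k. sigma p a s ^^ k)"

definition Cgrp :: "nat \<Rightarrow> nat \<Rightarrow> nat \<Rightarrow> (nat \<Rightarrow> nat) set" where
  "Cgrp p a s = {foldr (\<lambda>j f. (zcyc p j ^^ k j) \<circ> f) [1..<a*s+1] id | k. True}"

definition pic :: "nat \<Rightarrow> nat \<Rightarrow> nat \<Rightarrow> nat \<Rightarrow> nat \<Rightarrow> nat" where
  "pic p a s j = foldr (\<lambda>i f. zcyc p (j + i*s) \<circ> f) [0..<a] id"

definition Egrp :: "nat \<Rightarrow> nat \<Rightarrow> nat \<Rightarrow> (nat \<Rightarrow> nat) set" where
  "Egrp p a s = {foldr (\<lambda>j f. (pic p a s j ^^ k j) \<circ> f) [1..<s+1] id | k. True}"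

definition Normaliser :: "nat \<Rightarrow> nat \<Rightarrow> nat \<Rightarrow> (nat \<Rightarrow> nat) set" where
  "Normaliser p a s = {g. g permutes {1..a*s*p} \<and>
      (\<lambda>x. g \<circ> x \<circ> inv g) ` Rgrp p a s = Rgrp p a s}"

definition conjg :: "(nat \<Rightarrow> nat) \<Rightarrow> (nat \<Rightarrow> nat) set \<Rightarrow> (nat \<Rightarrow> nat) set" where
  "conjg g H = (\<lambda>x. inv g \<circ> x \<circ> g) ` H"

definition setparts :: "nat \<Rightarrow> nat \<Rightarrow> nat \<Rightarrow> nat set set set" where
  "setparts n m a = {\<omega>. partition_on {1..n} \<omega> \<and> (\<forall>B\<in>\<omega>. card B = a) \<and> card \<omega> = m}"

definition set_act :: "(nat \<Rightarrow> nat) \<Rightarrow> nat set set \<Rightarrow> nat set set" where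
  "set_act g \<omega> = (\<lambda>B. g ` B) ` \<omega>"

definition fixedR :: "nat \<Rightarrow> nat \<Rightarrow> nat \<Rightarrow> nat set set \<Rightarrow> bool" where
  "fixedR p a s \<omega> = (\<forall>r\<in>Rgrp p a s. set_act r \<omega> = \<omega>)"

text \<open>Fixed set partition omega has type delta (the A_i indexed by the blocks of delta).\<close>
definition has_type :: "nat \<Rightarrow> nat \<Rightarrow> nat \<Rightarrow> nat set set \<Rightarrow> nat set set \<Rightarrow> bool" where
  "has_type p a s \<delta> \<omega> = (\<exists>A :: nat set \<Rightarrow> nat set.
      (\<forall>D\<in>\<delta>. \<forall>j\<in>{1..a*s}. card (A D \<inter> Orb p j) = (if j \<in> D then 1 else 0)) \<and>
      \<omega> = {(sigma p a s ^^ k) ` A D | D k. D \<in> \<delta> \<and> k < p})"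

text \<open>Basis of K_delta: fixed set partitions (of H^(a^{sp})) of type delta.\<close>
definition Xdelta :: "nat \<Rightarrow> nat \<Rightarrow> nat \<Rightarrow> nat set set \<Rightarrow> nat set set set" where
  "Xdelta p a s \<delta> = {\<omega> \<in> setparts (a*s*p) (s*p) a. fixedR p a s \<omega> \<and> has_type p a s \<delta> \<omega>}"

definition cosets :: "(nat \<Rightarrow> nat) set \<Rightarrow> (nat \<Rightarrow> nat) set \<Rightarrow> (nat \<Rightarrow> nat) set set" where
  "cosets G H = {(\<lambda>h. c \<circ> h) ` H | c. c \<in> G}"

definition coset_act :: "(nat \<Rightarrow> nat) \<Rightarrow> (nat \<Rightarrow> nat) set \<Rightarrow> (nat \<Rightarrow> nat) set" where
  "coset_act g K = (\<lambda>k. g \<circ> k) ` K"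

text \<open>Permutation module F[X]: F-valued functions supported on the finite G-set X
  (f corresponds to sum of f x * x), with g acting by push-forward (linear extension
  of x |-> g.x).\<close>
definition permmod :: "'x set \<Rightarrow> ('x \<Rightarrow> 'F::field) set" where
  "permmod X = {f. \<forall>x. x \<notin> X \<longrightarrow> f x = 0}"

definition pmact :: "('g \<Rightarrow> 'x \<Rightarrow> 'x) \<Rightarrow> 'x set \<Rightarrow> 'g \<Rightarrow> ('x \<Rightarrow> 'F::field) \<Rightarrow> ('x \<Rightarrow> 'F)" where
  "pmact act X g f = (\<lambda>y. \<Sum>x\<in>{x\<in>X. act g x = y}. f x)"

definition FG_iso :: "'F::field itself \<Rightarrow> 'g set \<Rightarrow> ('g \<Rightarrow> 'x \<Rightarrow> 'x) \<Rightarrow> 'x set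
                       \<Rightarrow> ('g \<Rightarrow> 'y \<Rightarrow> 'y) \<Rightarrow> 'y set \<Rightarrow> bool" where
  "FG_iso TYPE('F) G actX X actY Y = (\<exists>\<phi> :: ('x \<Rightarrow> 'F) \<Rightarrow> ('y \<Rightarrow> 'F).
      bij_betw \<phi> (permmod X) (permmod Y) \<and>
      (\<forall>f\<in>permmod X. \<forall>h\<in>permmod X. \<phi> (\<lambda>x. f x + h x) = (\<lambda>y. \<phi> f y + \<phi> h y)) \<and>
      (\<forall>c. \<forall>f\<in>permmod X. \<phi> (\<lambda>x. c * f x) = (\<lambda>y. c * \<phi> f y)) \<and>
      (\<forall>g\<in>G. \<forall>f\<in>permmod X. \<phi> (pmact actX X g f) = pmact actY Y g (\<phi> f)))"

end

theory Submission
  imports Defs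
begin

definition shf :: "nat \<Rightarrow> nat \<Rightarrow> (nat \<Rightarrow> nat) \<Rightarrow> nat \<Rightarrow> nat" where
  "shf p N u x = (if 1 \<le> x \<and> x \<le> p*N
     then p*((x-1) div p) + ((x-1) mod p + u ((x-1) div p + 1)) mod p + 1 else x)"

lemma dm_simp[simp]: "r < (p::nat) \<Longrightarrow> (p*q + r) div p = q"
  by simp
lemma dm_simp2[simp]: "r < (p::nat) \<Longrightarrow> (p*q + r) mod p = r"
  by simp

lemma decomp: "1 \<le> (x::nat) \<Longrightarrow> x = p*((x-1) div p) + (x-1) mod p + 1"
  by simp

lemma range_div: "0 < p \<Longrightarrow> 1 \<le> (x::nat) \<Longrightarrow> x \<le> p*N \<Longrightarrow> (x-1) div p < N"
proof -
  assume a: "0 < p" "1 \<le> x" "x \<le> p*N"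
  have "x - 1 < p*N" using a by linarith
  then show ?thesis by (simp add: less_mult_imp_div_less mult.commute)
qed

lemma shf_in: assumes "0 < p" "1 \<le> x" "x \<le> p*N"
  shows "1 \<le> shf p N u x \<and> shf p N u x \<le> p*N \<and> (shf p N u x - 1) div p = (x-1) div p
    \<and> (shf p N u x - 1) mod p = ((x-1) mod p + u ((x-1) div p + 1)) mod p"
proof -
  have q: "(x-1) div p < N" using range_div assms by blast
  have r: "((x-1) mod p + u ((x-1) div p + 1)) mod p < p" using assms by simp
  have "p*((x-1) div p) + p \<le> p*N"
    using q by (metis Suc_leI add.commute mult_Suc_right mult_le_mono2)
  then show ?thesis using assms r by (simp add: shf_def)
qed

lemma shf_out: "\<not>(1 \<le> x \<and> x \<le> p*N) \<Longrightarrow> shf p N u x = x"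
  unfolding shf_def by (rule if_not_P)

lemma modlem: "((a + b) mod p + c) mod p = (a + (c + b)) mod (p::nat)"
  by (metis mod_add_left_eq add.commute add.left_commute)

lemma shf_comp: assumes "0 < p"
  shows "shf p N u \<circ> shf p N v = shf p N (\<lambda>i. u i + v i)"
proof
  fix x show "(shf p N u \<circ> shf p N v) x = shf p N (\<lambda>i. u i + v i) x"
  proof (cases "1 \<le> x \<and> x \<le> p*N")
    case True
    define y where "y = shf p N v x"
    have h: "1 \<le> y" "y \<le> p*N" "(y-1) div p = (x-1) div p"
       "(y - 1) mod p = ((x-1) mod p + v ((x-1) div p + 1)) mod p"
      using shf_in[OF assms, of x N v] True unfolding y_def by auto
    have "shf p N u y = p*((y-1) div p) + ((y-1) mod p + u ((y-1) div p + 1)) mod p + 1"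
      using h(1,2) by (simp add: shf_def[of p N u y])
    then have "shf p N u (shf p N v x) = p*((y-1) div p) + ((y-1) mod p + u ((y-1) div p + 1)) mod p + 1"
      by (simp only: y_def)
    also have "\<dots> = p*((x-1) div p) + (((x-1) mod p + v ((x-1) div p + 1)) mod p + u ((x-1) div p + 1)) mod p + 1"
      by (simp only: h(3) h(4))
    also have "\<dots> = shf p N (\<lambda>i. u i + v i) x"
      by (simp only: modlem) (use True in \<open>simp add: shf_def\<close>)
    finally show ?thesis by simp
  next
    case False
    then have "shf p N v x = x" "shf p N u x = x" "shf p N (\<lambda>i. u i + v i) x = x"
      by (simp_all add: shf_out)
    then show ?thesis by simp
  qed
qed

lemma mod_add_cong_r: "b mod p = c mod p \<Longrightarrow> (a + b) mod p = (a + c) mod (p::nat)"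
  by (metis mod_add_right_eq)

lemma shf_eq_iff: assumes "0 < p"
  shows "shf p N u = shf p N v \<longleftrightarrow> (\<forall>j\<in>{1..N}. u j mod p = v j mod p)"
proof
  assume e: "shf p N u = shf p N v"
  show "\<forall>j\<in>{1..N}. u j mod p = v j mod p"
  proof
    fix j assume j: "j \<in> {1..N}"
    define x where "x = p*(j-1) + 1"
    have "p*(j-1) + p = p*j" using j by (cases j) auto
    also have "\<dots> \<le> p*N" using j by simp
    finally have "p*(j-1) + p \<le> p*N" .
    then have x1: "1 \<le> x" "x \<le> p*N" using assms unfolding x_def by auto
    have "(x-1) div p = j - 1" "(x-1) mod p = 0" using assms by (simp_all add: x_def)
    then have "shf p N u x = p*(j-1) + u j mod p + 1" "shf p N v x = p*(j-1) + v j mod p + 1"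
      using x1 j by (auto simp: shf_def)
    then show "u j mod p = v j mod p" using e by simp
  qed
next
  assume h: "\<forall>j\<in>{1..N}. u j mod p = v j mod p"
  show "shf p N u = shf p N v"
  proof
    fix x show "shf p N u x = shf p N v x"
    proof (cases "1 \<le> x \<and> x \<le> p*N")
      case True
      have "(x-1) div p < N" using range_div[OF assms] True by blast
      then have "(x-1) div p + 1 \<in> {1..N}" by auto
      then have "u ((x-1) div p + 1) mod p = v ((x-1) div p + 1) mod p" using h by blast
      then have "((x-1) mod p + u ((x-1) div p + 1)) mod p = ((x-1) mod p + v ((x-1) div p + 1)) mod p"
        by (rule mod_add_cong_r)
      then show ?thesis using True unfolding shf_def by simp
    qed (simp add: shf_out)
  qed
qed

lemma shf_zero: "shf p N (\<lambda>_. 0) = id"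
  by (rule ext) (auto simp: shf_def)

lemma shf_pow: assumes "0 < p" shows "shf p N u ^^ m = shf p N (\<lambda>i. m * u i)"
proof (induction m)
  case 0 then show ?case using shf_zero by simp
next
  case (Suc m) then show ?case using shf_comp[OF assms] by (simp add: ac_simps)
qed

lemma zcyc_shf: assumes p: "0 < p" and j: "1 \<le> j" "j \<le> N"
  shows "zcyc p j = shf p N (\<lambda>i. if i = j then 1 else 0)"
proof
  fix x
  show "zcyc p j x = shf p N (\<lambda>i. if i = j then 1 else 0) x"
  proof (cases "1 \<le> x \<and> x \<le> p*N")
    case False
    have "\<not> (p*(j-1)+1 \<le> x \<and> x \<le> p*j)"
    proof
      assume a: "p*(j-1)+1 \<le> x \<and> x \<le> p*j"
      have "p*j \<le> p*N" using j by simp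
      then show False using False a by linarith
    qed
    moreover have "p*(j-1)+1 \<le> p*j" using j p by (cases j) auto
    ultimately have "zcyc p j x = x" unfolding zcyc_def by auto
    then show ?thesis using shf_out[OF False] by simp
  next
    case True
    define q where "q = (x-1) div p"
    define r where "r = (x-1) mod p"
    have x: "x = p*q + r + 1" using True unfolding q_def r_def by simp
    have r: "r < p" using p unfolding r_def by simp
    have sh: "shf p N (\<lambda>i. if i = j then 1 else 0) x = p*q + (r + (if q+1 = j then 1 else 0)) mod p + 1"
      using True unfolding shf_def q_def r_def by simp
    have pj: "p*j = p*(j-1) + p" using j by (cases j) auto
    consider "q = j - 1" | "q < j - 1" | "q > j - 1" by linarith
    then show ?thesis
    proof cases
      case 1
      then have qj: "q + 1 = j" using j by simp
      show ?thesis
      proof (cases "r + 1 < p")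
        case True
        then have "zcyc p j x = x + 1" unfolding zcyc_def x using 1 pj by auto
        then show ?thesis using sh qj True x by simp
      next
        case False
        then have rr: "r = p - 1" using r by simp
        then have "x = p*j" using x 1 pj p by simp
        then have "zcyc p j x = p*(j-1)+1" unfolding zcyc_def by simp
        moreover have "(r + 1) mod p = 0" using rr p by simp
        ultimately show ?thesis using sh qj 1 by simp
      qed
    next
      case 2
      then have "q + 1 \<le> j - 1" by simp
      then have "p*(q+1) \<le> p*(j-1)" by (rule mult_le_mono2)
      then have "x \<le> p*(j-1)" using x r by simp
      then have "zcyc p j x = x" unfolding zcyc_def using pj p by auto
      moreover have "q + 1 \<noteq> j" using 2 by simp
      ultimately show ?thesis using sh x r by simp
    next
      case 3
      then have "j \<le> q" by simp
      then have "p*j \<le> p*q" by (rule mult_le_mono2)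
      then have "x > p*j" using x by linarith
      then have "zcyc p j x = x" unfolding zcyc_def using pj p by auto
      moreover have "q + 1 \<noteq> j" using 3 by simp
      ultimately show ?thesis using sh x r by simp
    qed
  qed
qed

lemma foldr_pow_shf: assumes p: "0 < p"
  shows "distinct xs \<Longrightarrow> (\<forall>j\<in>set xs. F j = shf p N (v j)) \<Longrightarrow>
    foldr (\<lambda>j f. F j ^^ k j \<circ> f) xs id = shf p N (\<lambda>i. \<Sum>j\<in>set xs. k j * v j i)"
proof (induction xs)
  case Nil then show ?case using shf_zero by simp
next
  case (Cons x xs)
  have IH: "foldr (\<lambda>j f. F j ^^ k j \<circ> f) xs id = shf p N (\<lambda>i. \<Sum>j\<in>set xs. k j * v j i)"
    by (rule Cons.IH) (use Cons.prems in auto)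
  have Fx: "F x = shf p N (v x)" using Cons.prems by simp
  have "foldr (\<lambda>j f. F j ^^ k j \<circ> f) (x#xs) id = F x ^^ k x \<circ> foldr (\<lambda>j f. F j ^^ k j \<circ> f) xs id"
    by simp
  also have "\<dots> = shf p N (\<lambda>i. k x * v x i) \<circ> shf p N (\<lambda>i. \<Sum>j\<in>set xs. k j * v j i)"
    unfolding IH Fx shf_pow[OF p] ..
  also have "\<dots> = shf p N (\<lambda>i. \<Sum>j\<in>set (x#xs). k j * v j i)"
    using shf_comp[OF p] Cons.prems by simp
  finally show ?case .
qed

lemma foldr_shf: assumes p: "0 < p"
  shows "distinct xs \<Longrightarrow> (\<forall>j\<in>set xs. F j = shf p N (v j)) \<Longrightarrow>
    foldr (\<lambda>j f. F j \<circ> f) xs id = shf p N (\<lambda>i. \<Sum>j\<in>set xs. v j i)"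
proof (induction xs)
  case Nil then show ?case using shf_zero by simp
next
  case (Cons x xs)
  have IH: "foldr (\<lambda>j f. F j \<circ> f) xs id = shf p N (\<lambda>i. \<Sum>j\<in>set xs. v j i)"
    by (rule Cons.IH) (use Cons.prems in auto)
  have Fx: "F x = shf p N (v x)" using Cons.prems by simp
  have "foldr (\<lambda>j f. F j \<circ> f) (x#xs) id = F x \<circ> foldr (\<lambda>j f. F j \<circ> f) xs id"
    by simp
  also have "\<dots> = shf p N (v x) \<circ> shf p N (\<lambda>i. \<Sum>j\<in>set xs. v j i)"
    unfolding IH Fx ..
  also have "\<dots> = shf p N (\<lambda>i. \<Sum>j\<in>set (x#xs). v j i)"
    using shf_comp[OF p] Cons.prems by simp
  finally show ?case .
qed

lemma sum_ind: "finite A \<Longrightarrow> (\<Sum>j\<in>A. k j * (if i = j then 1 else 0)) = (if i \<in> A then k i else (0::nat))"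
proof -
  assume "finite A"
  have "(\<Sum>j\<in>A. k j * (if i = j then 1 else 0)) = (\<Sum>j\<in>A. if i = j then k j else 0)"
    by (rule sum.cong) auto
  then show ?thesis using \<open>finite A\<close> by simp
qed

lemma sigma_shf: assumes p: "0 < p" shows "sigma p a s = shf p (a*s) (\<lambda>_. 1)"
proof -
  have "sigma p a s = shf p (a*s) (\<lambda>i. \<Sum>j\<in>set [1..<a*s+1]. (if i = j then 1 else 0))"
    unfolding sigma_def
    by (rule foldr_shf[OF p]) (auto intro: zcyc_shf[OF p])
  also have "\<dots> = shf p (a*s) (\<lambda>_. 1)"
    using p by (subst shf_eq_iff) auto
  finally show ?thesis .
qed

lemma Cgrp_shf: assumes p: "0 < p" shows "Cgrp p a s = range (shf p (a*s))"
proof -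
  have e: "foldr (\<lambda>j f. (zcyc p j ^^ k j) \<circ> f) [1..<a*s+1] id = shf p (a*s) k" for k
  proof -
    have "foldr (\<lambda>j f. (zcyc p j ^^ k j) \<circ> f) [1..<a*s+1] id
       = shf p (a*s) (\<lambda>i. \<Sum>j\<in>set [1..<a*s+1]. k j * (if i = j then 1 else 0))"
      by (rule foldr_pow_shf[OF p]) (auto intro: zcyc_shf[OF p])
    also have "\<dots> = shf p (a*s) k"
      using p by (subst shf_eq_iff) (auto simp: sum_ind)
    finally show ?thesis .
  qed
  show ?thesis unfolding Cgrp_def e by auto
qed

lemma pic_shf: fixes a s j :: nat assumes p: "0 < p" and j: "1 \<le> j" "j \<le> s"
  shows "pic p a s j = shf p (a*s) (\<lambda>i. \<Sum>t\<in>{0..<a}. (if i = j + t*s then 1 else 0))"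
proof -
  have "pic p a s j = shf p (a*s) (\<lambda>i. \<Sum>t\<in>set [0..<a]. (if i = j + t*s then 1 else 0))"
    unfolding pic_def
  proof (rule foldr_shf[OF p])
    show "\<forall>t\<in>set [0..<a]. zcyc p (j + t * s) = shf p (a * s) (\<lambda>i. if i = j + t * s then 1 else 0)"
    proof
      fix t assume "t \<in> set [0..<a]"
      then have "t + 1 \<le> a" by simp
      then have "(t+1)*s \<le> a*s" by (rule mult_le_mono1)
      then have "j + t*s \<le> a*s" using j by simp
      then show "zcyc p (j + t * s) = shf p (a * s) (\<lambda>i. if i = j + t * s then 1 else 0)"
        using j by (intro zcyc_shf[OF p]) auto
    qed
  qed simp
  then show ?thesis by simp
qed

lemma inner_ind: fixes a s i j :: nat assumes s: "0 < s" and j: "1 \<le> j" "j \<le> s" and i: "1 \<le> i" "i \<le> a*s"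
  shows "(\<Sum>t\<in>{0..<a}. (if i = j + t*s then 1 else 0)) = (if j = (i-1) mod s + 1 then 1 else (0::nat))"
proof -
  have iff: "(i = j + t*s) \<longleftrightarrow> (j = (i-1) mod s + 1 \<and> t = (i-1) div s)" for t
  proof
    assume h: "i = j + t*s"
    then have e: "i - 1 = s*t + (j-1)" using j by (cases j) auto
    have l: "j - 1 < s" using j by simp
    have "(i-1) mod s = j - 1" "(i-1) div s = t" unfolding e using l by (simp_all only: dm_simp dm_simp2)
    then show "j = (i-1) mod s + 1 \<and> t = (i-1) div s" using j by simp
  next
    assume "j = (i-1) mod s + 1 \<and> t = (i-1) div s"
    then show "i = j + t*s" using i by (metis add.commute add.left_commute div_mult_mod_eq le_add_diff_inverse)
  qed
  have "i - 1 < a*s" using i by linarith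
  then have lt: "(i-1) div s < a" by (rule less_mult_imp_div_less)
  have "(\<Sum>t\<in>{0..<a}. (if i = j + t*s then 1 else (0::nat)))
     = (\<Sum>t\<in>{0..<a}. (if t = (i-1) div s then (if j = (i-1) mod s + 1 then 1 else 0) else 0))"
    by (rule sum.cong) (auto simp: iff)
  also have "\<dots> = (if j = (i-1) mod s + 1 then 1 else (0::nat))"
    using lt by simp
  finally show ?thesis .
qed

lemma Egrp_shf: assumes p: "0 < p"
  shows "Egrp p a s = {shf p (a*s) (\<lambda>i. k ((i-1) mod s + 1)) | k. True}"
proof -
  have e: "foldr (\<lambda>j f. (pic p a s j ^^ k j) \<circ> f) [1..<s+1] id = shf p (a*s) (\<lambda>i. k ((i-1) mod s + 1))" for k
  proof -
    have "foldr (\<lambda>j f. (pic p a s j ^^ k j) \<circ> f) [1..<s+1] id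
       = shf p (a*s) (\<lambda>i. \<Sum>j\<in>set [1..<s+1]. k j * (\<Sum>t\<in>{0..<a}. (if i = j + t*s then 1 else 0)))"
      by (rule foldr_pow_shf[OF p]) (auto intro: pic_shf[OF p])
    also have "\<dots> = shf p (a*s) (\<lambda>i. k ((i-1) mod s + 1))"
    proof (subst shf_eq_iff[OF p], intro ballI)
      fix i assume i: "i \<in> {1..a*s}"
      then have s: "0 < s" by (cases s) auto
      have "(\<Sum>j\<in>set [1..<s+1]. k j * (\<Sum>t\<in>{0..<a}. (if i = j + t*s then 1 else 0)))
          = (\<Sum>j\<in>{1..<s+1}. k j * (if (i-1) mod s + 1 = j then 1 else 0))"
        by (rule sum.cong) (use i s inner_ind[OF s] in auto)
      also have "\<dots> = k ((i-1) mod s + 1)"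
        using s by (subst sum_ind) auto
      finally show "(\<Sum>j\<in>set [1..<s+1]. k j * (\<Sum>t\<in>{0..<a}. (if i = j + t*s then 1 else 0))) mod p
          = k ((i-1) mod s + 1) mod p" by simp
    qed
    finally show ?thesis .
  qed
  show ?thesis unfolding Egrp_def e by auto
qed

definition blk :: "nat set set \<Rightarrow> nat \<Rightarrow> nat set" where
  "blk \<delta> i = (THE D. D \<in> \<delta> \<and> i \<in> D)"

lemma part_uniq: "partition_on A P \<Longrightarrow> D \<in> P \<Longrightarrow> D' \<in> P \<Longrightarrow> x \<in> D \<Longrightarrow> x \<in> D' \<Longrightarrow> D = D'"
  unfolding partition_on_def disjoint_def by (auto simp: disjnt_def)

lemma blk_eq: "partition_on A \<delta> \<Longrightarrow> D \<in> \<delta> \<Longrightarrow> i \<in> D \<Longrightarrow> blk \<delta> i = D"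
  unfolding blk_def by (rule the_equality) (auto dest: part_uniq)

lemma blk_in: "partition_on A \<delta> \<Longrightarrow> i \<in> A \<Longrightarrow> blk \<delta> i \<in> \<delta> \<and> i \<in> blk \<delta> i"
proof -
  assume P: "partition_on A \<delta>" and i: "i \<in> A"
  then obtain D where "D \<in> \<delta>" "i \<in> D" using partition_onD1 by blast
  then show ?thesis using blk_eq[OF P] by simp
qed

lemma tau_exists:
  fixes a s :: nat
  assumes P: "partition_on {1..a*s} \<delta>" and cD: "\<forall>D\<in>\<delta>. card D = a" and cd: "card \<delta> = s"
  shows "\<exists>\<tau>. \<tau> ` {1..a*s} \<subseteq> {1..a*s} \<and> inj_on \<tau> {1..a*s} \<and>
     (\<forall>i\<in>{1..a*s}. \<forall>i'\<in>{1..a*s}. ((\<tau> i - 1) mod s = (\<tau> i' - 1) mod s \<longleftrightarrow> blk \<delta> i = blk \<delta> i'))"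
proof -
  have fd: "finite \<delta>" using finite_elements[OF _ P] by simp
  obtain e where e: "bij_betw e \<delta> {0..<s}" using ex_bij_betw_finite_nat[OF fd] cd by blast
  have "\<forall>D\<in>\<delta>. \<exists>f. bij_betw f D {0..<a}"
  proof
    fix D assume D: "D \<in> \<delta>"
    have "D \<subseteq> {1..a*s}" using P D partition_onD1 by blast
    then have "finite D" by (rule finite_subset) simp
    then show "\<exists>f. bij_betw f D {0..<a}" using ex_bij_betw_finite_nat cD D by metis
  qed
  then obtain f where f: "\<forall>D\<in>\<delta>. bij_betw (f D) D {0..<a}" by metis
  define \<tau> where "\<tau> i = f (blk \<delta> i) i * s + e (blk \<delta> i) + 1" for i
  have bi: "blk \<delta> i \<in> \<delta> \<and> i \<in> blk \<delta> i" if "i \<in> {1..a*s}" for i using blk_in[OF P that] .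
  have fl: "f (blk \<delta> i) i < a" if "i \<in> {1..a*s}" for i
  proof -
    have "f (blk \<delta> i) i \<in> f (blk \<delta> i) ` blk \<delta> i" using bi[OF that] by blast
    moreover have "f (blk \<delta> i) ` blk \<delta> i = {0..<a}" using f bi[OF that] by (simp add: bij_betw_def)
    ultimately show ?thesis by simp
  qed
  have el: "e (blk \<delta> i) < s" if "i \<in> {1..a*s}" for i
  proof -
    have "e (blk \<delta> i) \<in> e ` \<delta>" using bi[OF that] by blast
    then show ?thesis using e by (auto simp: bij_betw_def)
  qed
  have tm: "(\<tau> i - 1) mod s = e (blk \<delta> i)" "(\<tau> i - 1) div s = f (blk \<delta> i) i"
    if "i \<in> {1..a*s}" for i
    using el[OF that] unfolding \<tau>_def by (simp_all add: mult.commute)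
  have rng: "\<tau> ` {1..a*s} \<subseteq> {1..a*s}"
  proof
    fix x assume "x \<in> \<tau> ` {1..a*s}"
    then obtain i where i: "i \<in> {1..a*s}" and x: "x = \<tau> i" by blast
    have "f (blk \<delta> i) i + 1 \<le> a" using fl[OF i] by simp
    then have "(f (blk \<delta> i) i + 1) * s \<le> a * s" by (rule mult_le_mono1)
    then show "x \<in> {1..a*s}" using el[OF i] unfolding x \<tau>_def by simp
  qed
  have tb: "(\<tau> i - 1) mod s = (\<tau> i' - 1) mod s \<longleftrightarrow> blk \<delta> i = blk \<delta> i'"
    if i: "i \<in> {1..a*s}" and i': "i' \<in> {1..a*s}" for i i'
  proof -
    have "inj_on e \<delta>" using e by (simp add: bij_betw_def)
    then show ?thesis using tm[OF i] tm[OF i'] bi[OF i] bi[OF i'] by (auto dest: inj_onD)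
  qed
  have inj: "inj_on \<tau> {1..a*s}"
  proof (rule inj_onI)
    fix i i' assume i: "i \<in> {1..a*s}" and i': "i' \<in> {1..a*s}" and eq: "\<tau> i = \<tau> i'"
    then have b: "blk \<delta> i = blk \<delta> i'" using tb by metis
    have "f (blk \<delta> i) i = f (blk \<delta> i) i'" using tm(2)[OF i] tm(2)[OF i'] eq b by simp
    moreover have "inj_on (f (blk \<delta> i)) (blk \<delta> i)" using f bi[OF i] by (simp add: bij_betw_def)
    ultimately show "i = i'" using bi[OF i] bi[OF i'] b by (auto dest: inj_onD)
  qed
  show ?thesis using rng inj tb by blast
qed

lemma tau_mem: "\<tau> ` {1..N} \<subseteq> {1..N} \<Longrightarrow> k \<in> {1..N} \<Longrightarrow> \<tau> k \<in> {1..(N::nat)}"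
  by blast

definition gperm :: "nat \<Rightarrow> nat \<Rightarrow> (nat \<Rightarrow> nat) \<Rightarrow> nat \<Rightarrow> nat" where
  "gperm p N \<tau> x = (if 1 \<le> x \<and> x \<le> p*N then p*(\<tau> ((x-1) div p + 1) - 1) + (x-1) mod p + 1 else x)"

lemma gperm_out: "\<not>(1 \<le> x \<and> x \<le> p*N) \<Longrightarrow> gperm p N \<tau> x = x"
  unfolding gperm_def by (rule if_not_P)

lemma gperm_in: assumes p: "0 < p" and t: "\<tau> ` {1..N} \<subseteq> {1..N}" and x: "1 \<le> x" "x \<le> p*N"
  shows "1 \<le> gperm p N \<tau> x \<and> gperm p N \<tau> x \<le> p*N \<and>
    (gperm p N \<tau> x - 1) div p = \<tau> ((x-1) div p + 1) - 1 \<and> (gperm p N \<tau> x - 1) mod p = (x-1) mod p"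
proof -
  have "(x-1) div p < N" using range_div[OF p x] .
  then have "\<tau> ((x-1) div p + 1) \<in> {1..N}" using tau_mem[OF t] by auto
  then have m: "\<tau> ((x-1) div p + 1) - 1 + 1 \<le> N" by auto
  have "p*(\<tau> ((x-1) div p + 1) - 1) + p \<le> p*N"
    using mult_le_mono2[OF m, of p] by (simp add: algebra_simps)
  moreover have r: "(x-1) mod p < p" using p by simp
  moreover have g: "gperm p N \<tau> x = p*(\<tau> ((x-1) div p + 1) - 1) + (x-1) mod p + 1"
    using x unfolding gperm_def by simp
  ultimately show ?thesis
  proof (simp only: g)
    fix M R :: nat assume a: "p*M + p \<le> p*N" "R < p"
    show "1 \<le> p*M + R + 1 \<and> p*M + R + 1 \<le> p*N \<and> (p*M + R + 1 - 1) div p = M \<and> (p*M + R + 1 - 1) mod p = R"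
      using a by simp
  qed
qed

lemma gperm_permutes: assumes p: "0 < p" and t: "\<tau> ` {1..N} \<subseteq> {1..N}" and inj: "inj_on \<tau> {1..N}"
  shows "gperm p N \<tau> permutes {1..p*N}"
proof (rule bij_imp_permutes)
  have sub: "gperm p N \<tau> ` {1..p*N} \<subseteq> {1..p*N}" using gperm_in[OF p t] by auto
  have "inj_on (gperm p N \<tau>) {1..p*N}"
  proof (rule inj_onI)
    fix x y assume x: "x \<in> {1..p*N}" and y: "y \<in> {1..p*N}" and eq: "gperm p N \<tau> x = gperm p N \<tau> y"
    have gx: "(gperm p N \<tau> x - 1) div p = \<tau> ((x-1) div p + 1) - 1" "(gperm p N \<tau> x - 1) mod p = (x-1) mod p"
      using gperm_in[OF p t, of x] x by auto
    have gy: "(gperm p N \<tau> y - 1) div p = \<tau> ((y-1) div p + 1) - 1" "(gperm p N \<tau> y - 1) mod p = (y-1) mod p"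
      using gperm_in[OF p t, of y] y by auto
    have ix: "(x-1) div p + 1 \<in> {1..N}" using range_div[OF p, of x N] x by auto
    have iy: "(y-1) div p + 1 \<in> {1..N}" using range_div[OF p, of y N] y by auto
    have "\<tau> ((x-1) div p + 1) - 1 = \<tau> ((y-1) div p + 1) - 1" using gx gy eq by simp
    moreover have "\<tau> ((x-1) div p + 1) \<ge> 1" "\<tau> ((y-1) div p + 1) \<ge> 1"
      using tau_mem[OF t ix] tau_mem[OF t iy] by auto
    ultimately have "\<tau> ((x-1) div p + 1) = \<tau> ((y-1) div p + 1)" by simp
    then have "(x-1) div p = (y-1) div p" using inj ix iy by (auto dest: inj_onD)
    moreover have "(x-1) mod p = (y-1) mod p" using gx gy eq by simp
    ultimately have "x - 1 = y - 1" by (metis div_mult_mod_eq)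
    moreover have "x = (x-1)+1" "y = (y-1)+1" using x y by auto
    ultimately show "x = y" by metis
  qed
  then show "bij_betw (gperm p N \<tau>) {1..p*N} {1..p*N}"
    using endo_inj_surj[OF _ sub] by (simp add: bij_betw_def)
qed (simp add: gperm_out)

lemma gperm_comm: assumes p: "0 < p" and t: "\<tau> ` {1..N} \<subseteq> {1..N}"
  shows "shf p N u \<circ> gperm p N \<tau> = gperm p N \<tau> \<circ> shf p N (u \<circ> \<tau>)"
proof
  fix x show "(shf p N u \<circ> gperm p N \<tau>) x = (gperm p N \<tau> \<circ> shf p N (u \<circ> \<tau>)) x"
  proof (cases "1 \<le> x \<and> x \<le> p*N")
    case False
    then show ?thesis by (simp add: shf_out gperm_out)
  next
    case True
    define q where "q = (x-1) div p"
    define r where "r = (x-1) mod p"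
    define y where "y = gperm p N \<tau> x"
    have q: "q < N" using range_div[OF p] True unfolding q_def by blast
    then have tq: "\<tau> (q+1) \<in> {1..N}" using tau_mem[OF t] by auto
    have hy: "1 \<le> y" "y \<le> p*N" "(y-1) div p = \<tau> (q+1) - 1" "(y-1) mod p = r"
      using gperm_in[OF p t, of x] True unfolding y_def q_def r_def by auto
    have "shf p N u y = p*(\<tau> (q+1) - 1) + (r + u (\<tau> (q+1))) mod p + 1"
      using hy tq unfolding shf_def[of p N u y] by simp
    moreover
    define z where "z = shf p N (u \<circ> \<tau>) x"
    have hz: "1 \<le> z" "z \<le> p*N" "(z-1) div p = q" "(z-1) mod p = (r + u (\<tau> (q+1))) mod p"
      using shf_in[OF p, of x N "u \<circ> \<tau>"] True unfolding z_def q_def r_def by auto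
    have "gperm p N \<tau> z = p*(\<tau> (q+1) - 1) + (r + u (\<tau> (q+1))) mod p + 1"
      using hz unfolding gperm_def[of p N \<tau> z] by simp
    ultimately show ?thesis unfolding y_def z_def by simp
  qed
qed

lemma FG_iso_param:
  fixes F :: "'a \<Rightarrow> 'x" and Q :: "'a \<Rightarrow> 'y"
  assumes X: "X = F ` A" and Y: "Y = Q ` A" and eq: "\<forall>a\<in>A. \<forall>b\<in>A. F a = F b \<longleftrightarrow> Q a = Q b"
    and act: "\<forall>g\<in>G. \<forall>a\<in>A. \<exists>b\<in>A. actX g (F a) = F b \<and> actY g (Q a) = Q b"
  shows "FG_iso TYPE('F::field) G actX X actY Y"
proof -
  define \<beta> where "\<beta> y = F (SOME a. a \<in> A \<and> Q a = y)" for y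
  have \<beta>Q: "\<beta> (Q a) = F a" if a: "a \<in> A" for a
  proof -
    have "\<exists>a'. a' \<in> A \<and> Q a' = Q a" using a by blast
    then have "(SOME a'. a' \<in> A \<and> Q a' = Q a) \<in> A \<and> Q (SOME a'. a' \<in> A \<and> Q a' = Q a) = Q a"
      by (rule someI_ex)
    then show ?thesis unfolding \<beta>_def using eq a by blast
  qed
  have inj: "inj_on \<beta> Y"
  proof (rule inj_onI)
    fix y y' assume "y \<in> Y" "y' \<in> Y" "\<beta> y = \<beta> y'"
    then obtain a a' where "a \<in> A" "a' \<in> A" "y = Q a" "y' = Q a'" "\<beta> (Q a) = \<beta> (Q a')" using Y by blast
    then show "y = y'" using \<beta>Q eq by auto
  qed
  have img: "\<beta> ` Y = X" unfolding X Y using \<beta>Q by (auto simp: image_image)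
  have comp: "actY g y \<in> Y \<and> actX g (\<beta> y) = \<beta> (actY g y)" if g: "g \<in> G" and y: "y \<in> Y" for g y
  proof -
    obtain a where a: "a \<in> A" "y = Q a" using y Y by blast
    obtain b where b: "b \<in> A" "actX g (F a) = F b" "actY g (Q a) = Q b" using act g a(1) by blast
    show ?thesis using a b \<beta>Q Y by auto
  qed
  define \<phi> :: "('x \<Rightarrow> 'F) \<Rightarrow> ('y \<Rightarrow> 'F)" where "\<phi> f = (\<lambda>y. if y \<in> Y then f (\<beta> y) else 0)" for f
  define \<psi> :: "('y \<Rightarrow> 'F) \<Rightarrow> ('x \<Rightarrow> 'F)" where "\<psi> h = (\<lambda>x. if x \<in> X then h (inv_into Y \<beta> x) else 0)" for h
  have bij: "bij_betw \<phi> (permmod X) (permmod Y)"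
  proof (rule bij_betw_byWitness[where f'=\<psi>])
    show "\<forall>f\<in>permmod X. \<psi> (\<phi> f) = f"
    proof
      fix f :: "'x \<Rightarrow> 'F" assume f: "f \<in> permmod X"
      show "\<psi> (\<phi> f) = f"
      proof
        fix x show "\<psi> (\<phi> f) x = f x"
        proof (cases "x \<in> X")
          case True
          then have "inv_into Y \<beta> x \<in> Y" "\<beta> (inv_into Y \<beta> x) = x" using img
            by (auto intro: inv_into_into f_inv_into_f)
          then show ?thesis using True unfolding \<psi>_def \<phi>_def by simp
        next
          case False then show ?thesis using f unfolding \<psi>_def permmod_def by simp
        qed
      qed
    qed
    show "\<forall>h\<in>permmod Y. \<phi> (\<psi> h) = h"
    proof
      fix h :: "'y \<Rightarrow> 'F" assume h: "h \<in> permmod Y"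
      show "\<phi> (\<psi> h) = h"
      proof
        fix y show "\<phi> (\<psi> h) y = h y"
        proof (cases "y \<in> Y")
          case True
          then have "\<beta> y \<in> X" "inv_into Y \<beta> (\<beta> y) = y" using img inj by (auto intro: inv_into_f_f)
          then show ?thesis using True unfolding \<psi>_def \<phi>_def by simp
        next
          case False then show ?thesis using h unfolding \<phi>_def permmod_def by simp
        qed
      qed
    qed
    show "\<phi> ` permmod X \<subseteq> permmod Y" unfolding \<phi>_def permmod_def by auto
    show "\<psi> ` permmod Y \<subseteq> permmod X" unfolding \<psi>_def permmod_def by auto
  qed
  have add: "\<forall>f\<in>permmod X. \<forall>h\<in>permmod X. \<phi> (\<lambda>x. f x + h x) = (\<lambda>y. \<phi> f y + \<phi> h y)"
    unfolding \<phi>_def by auto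
  have smul: "\<forall>c. \<forall>f\<in>permmod X. \<phi> (\<lambda>x. c * f x) = (\<lambda>y. c * \<phi> f y)"
    unfolding \<phi>_def by auto
  have eqv: "\<forall>g\<in>G. \<forall>f\<in>permmod X. \<phi> (pmact actX X g f) = pmact actY Y g (\<phi> f)"
  proof (intro ballI ext)
    fix g and f :: "'x \<Rightarrow> 'F" and y assume g: "g \<in> G" and f: "f \<in> permmod X"
    show "\<phi> (pmact actX X g f) y = pmact actY Y g (\<phi> f) y"
    proof (cases "y \<in> Y")
      case False
      have e: "{y'\<in>Y. actY g y' = y} = {}" using comp[OF g] False by auto
      show ?thesis using False unfolding \<phi>_def pmact_def e by simp
    next
      case True
      have im: "\<beta> ` {y'\<in>Y. actY g y' = y} = {x\<in>X. actX g x = \<beta> y}"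
      proof (intro equalityI subsetI)
        fix x assume "x \<in> \<beta> ` {y'\<in>Y. actY g y' = y}"
        then obtain y' where "y' \<in> Y" "actY g y' = y" "x = \<beta> y'" by blast
        then show "x \<in> {x\<in>X. actX g x = \<beta> y}" using comp[OF g] img by auto
      next
        fix x assume x: "x \<in> {x\<in>X. actX g x = \<beta> y}"
        then obtain y' where y': "y' \<in> Y" "x = \<beta> y'" using img by blast
        then have "\<beta> (actY g y') = \<beta> y" using comp[OF g y'(1)] x by simp
        then have "actY g y' = y" using inj comp[OF g y'(1)] True by (auto dest: inj_onD)
        then show "x \<in> \<beta> ` {y'\<in>Y. actY g y' = y}" using y' by blast
      qed
      have injs: "inj_on \<beta> {y'\<in>Y. actY g y' = y}" using inj by (rule inj_on_subset) auto
      have "\<phi> (pmact actX X g f) y = (\<Sum>x\<in>{x\<in>X. actX g x = \<beta> y}. f x)"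
        using True unfolding \<phi>_def pmact_def by simp
      also have "\<dots> = (\<Sum>y'\<in>{y'\<in>Y. actY g y' = y}. f (\<beta> y'))"
        unfolding im[symmetric] by (rule sum.reindex[OF injs, unfolded comp_def])
      also have "\<dots> = pmact actY Y g (\<phi> f) y"
        unfolding pmact_def \<phi>_def by (rule sum.cong) auto
      finally show ?thesis .
    qed
  qed
  show ?thesis unfolding FG_iso_def using bij add smul eqv by blast
qed

definition Pset :: "nat \<Rightarrow> nat set set \<Rightarrow> (nat \<Rightarrow> nat) set" where
  "Pset p \<delta> = {u. \<forall>D\<in>\<delta>. \<forall>i\<in>D. \<forall>j\<in>D. u i mod p = u j mod p}"

definition Qc :: "nat \<Rightarrow> nat \<Rightarrow> nat set set \<Rightarrow> (nat \<Rightarrow> nat) \<Rightarrow> (nat \<Rightarrow> nat) set" where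
  "Qc p N \<delta> l = (\<lambda>h. shf p N l \<circ> h) ` (shf p N ` Pset p \<delta>)"

definition Al :: "nat \<Rightarrow> (nat \<Rightarrow> nat) \<Rightarrow> nat set \<Rightarrow> nat set" where
  "Al p l D = (\<lambda>j. p*(j-1) + l j mod p + 1) ` D"

definition om :: "nat \<Rightarrow> nat set set \<Rightarrow> (nat \<Rightarrow> nat) \<Rightarrow> nat set set" where
  "om p \<delta> l = (\<lambda>(D,k). Al p (\<lambda>j. l j + k) D) ` (\<delta> \<times> {..<p})"

definition RelB :: "nat \<Rightarrow> nat set set \<Rightarrow> (nat \<Rightarrow> nat) \<Rightarrow> (nat \<Rightarrow> nat) \<Rightarrow> bool" where
  "RelB p \<delta> l l' = (\<forall>D\<in>\<delta>. \<exists>k. \<forall>j\<in>D. l j mod p = (l' j + k) mod p)"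

lemma mod_add_cong_l: "a mod p = b mod p \<Longrightarrow> (a + m) mod p = (b + m) mod (p::nat)"
  by (metis mod_add_left_eq)

lemma decode: assumes "1 \<le> j" "1 \<le> j'" "r < p" "r' < (p::nat)" "p*(j-1)+r+1 = p*(j'-1)+r'+1"
  shows "j = j' \<and> r = r'"
proof -
  have "p*(j-1)+r = p*(j'-1)+r'" using assms by simp
  then have "(p*(j-1)+r) div p = (p*(j'-1)+r') div p" "(p*(j-1)+r) mod p = (p*(j'-1)+r') mod p" by simp_all
  then show ?thesis using assms by simp
qed

lemma mod_back: "0 < p \<Longrightarrow> (x + k + (p - k mod p)) mod p = x mod (p::nat)"
proof -
  assume p: "0 < p"
  have lt: "k mod p < p" using p by simp
  have "k = p * (k div p) + k mod p" by simp
  then have "k + (p - k mod p) = p * (k div p) + p" using lt by linarith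
  also have "\<dots> = p * (k div p + 1)" by simp
  finally have "k + (p - k mod p) = p * (k div p + 1)" .
  then have e: "x + k + (p - k mod p) = x + (k div p + 1) * p" by (simp add: ac_simps)
  show ?thesis unfolding e by (rule mod_mult_self1)
qed

lemma RelB_sym: "0 < p \<Longrightarrow> RelB p \<delta> l l' \<Longrightarrow> RelB p \<delta> l' l"
  unfolding RelB_def
proof (intro ballI)
  fix D assume p: "0 < p" and h: "\<forall>D\<in>\<delta>. \<exists>k. \<forall>j\<in>D. l j mod p = (l' j + k) mod p" and D: "D \<in> \<delta>"
  then obtain k where k: "\<forall>j\<in>D. l j mod p = (l' j + k) mod p" by blast
  have "\<forall>j\<in>D. l' j mod p = (l j + (p - k mod p)) mod p"
  proof
    fix j assume "j \<in> D"
    then have "(l j + (p - k mod p)) mod p = (l' j + k + (p - k mod p)) mod p"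
      by (rule mod_add_cong_l[OF k[rule_format]])
    then show "l' j mod p = (l j + (p - k mod p)) mod p" using mod_back[OF p] by simp
  qed
  then show "\<exists>k. \<forall>j\<in>D. l' j mod p = (l j + k) mod p" by blast
qed

lemma L_le: assumes "r < (p::nat)" shows "(p*a \<le> p*q + r) = (a \<le> q)"
proof
  assume h: "p*a \<le> p*q + r"
  show "a \<le> q"
  proof (rule ccontr)
    assume "\<not> a \<le> q"
    then have "q + 1 \<le> a" by simp
    then have "p*(q+1) \<le> p*a" by (rule mult_le_mono2)
    then show False using h assms by simp
  qed
next
  assume "a \<le> q"
  then have "p*a \<le> p*q" by (rule mult_le_mono2)
  then show "p*a \<le> p*q + r" by linarith
qed

lemma L_lt: assumes "r < (p::nat)" shows "(p*q + r < p*a) = (q < a)"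
  using L_le[OF assms, of a q] by linarith

lemma Orb_iff: assumes p: "0 < p" and j: "1 \<le> j"
  shows "x \<in> Orb p j \<longleftrightarrow> 1 \<le> x \<and> (x-1) div p = j - 1"
proof (cases "1 \<le> x")
  case False
  then show ?thesis unfolding Orb_def by auto
next
  case True
  define q where "q = (x-1) div p"
  define r where "r = (x-1) mod p"
  have x: "x = p*q + r + 1" using True unfolding q_def r_def by simp
  have r: "r < p" using p unfolding r_def by simp
  have pj: "p*j = p*(j-1+1)" using j by simp
  have "x \<in> Orb p j \<longleftrightarrow> p*(j-1) \<le> p*q + r \<and> p*q + r < p*(j-1+1)"
    unfolding Orb_def x pj by auto
  also have "\<dots> \<longleftrightarrow> j - 1 \<le> q \<and> q < j - 1 + 1" by (simp only: L_le[OF r] L_lt[OF r])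
  also have "\<dots> \<longleftrightarrow> q = j - 1" by linarith
  finally show ?thesis using True unfolding q_def by simp
qed

lemma mod_cancel: assumes p: "0 < p" and e: "(a + k) mod p = (a + k') mod (p::nat)"
  shows "k mod p = k' mod p"
proof -
  have "(a + k + (p - a mod p)) mod p = (a + k' + (p - a mod p)) mod p"
    by (rule mod_add_cong_l[OF e])
  moreover have "a + k + (p - a mod p) = k + a + (p - a mod p)" "a + k' + (p - a mod p) = k' + a + (p - a mod p)"
    by simp_all
  ultimately show ?thesis using mod_back[OF p] by metis
qed

lemma mod_fill: assumes p: "0 < p" and r: "r < (p::nat)"
  shows "(c + (r + p - c mod p) mod p) mod p = r"
proof -
  have "(c + (r + p - c mod p) mod p) mod p = (c + (r + p - c mod p)) mod p" by (simp add: mod_add_right_eq)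
  also have "c + (r + p - c mod p) = r + c + (p - c mod p)"
    using mod_less_divisor[OF p, of c] by linarith
  also have "(r + c + (p - c mod p)) mod p = r mod p" by (rule mod_back[OF p])
  finally show ?thesis using r by simp
qed

context
  fixes p a s :: nat and \<delta> :: "nat set set"
  assumes p: "0 < p" and P: "partition_on {1..a*s} \<delta>"
begin

lemma D_sub: "D \<in> \<delta> \<Longrightarrow> D \<subseteq> {1..a*s}"
  using partition_onD1[OF P] by blast

lemma D_ne: "D \<in> \<delta> \<Longrightarrow> D \<noteq> {}"
  using partition_onD3[OF P] by blast

lemma Al_mem: assumes D': "D' \<in> \<delta>" and j: "1 \<le> j" and r: "r < p"
    and x: "p*(j-1)+r+1 \<in> Al p l D'"
  shows "j \<in> D' \<and> r = l j mod p"
proof -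
  obtain j' where j': "j' \<in> D'" and e: "p*(j-1)+r+1 = p*(j'-1) + l j' mod p + 1"
    using x unfolding Al_def by blast
  have "1 \<le> j'" using D_sub[OF D'] j' by auto
  then have "j = j' \<and> r = l j' mod p" using decode[OF j _ r _ e] p by simp
  then show ?thesis using j' by simp
qed

lemma shf_Al: assumes D: "D \<in> \<delta>"
  shows "shf p (a*s) c ` Al p l D = Al p (\<lambda>j. c j + l j) D"
  unfolding Al_def image_image
proof (rule image_cong[OF refl])
  fix j assume j: "j \<in> D"
  then have j1: "1 \<le> j" "j \<le> a*s" using D_sub[OF D] by auto
  define x where "x = p*(j-1) + l j mod p + 1"
  have "p*(j-1) + p \<le> p*(a*s)"
  proof -
    have "p*(j-1) + p = p*j" using j1 by (cases j) auto
    also have "\<dots> \<le> p*(a*s)" using j1 by simp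
    finally show ?thesis .
  qed
  moreover have lp: "l j mod p < p" using p by simp
  ultimately have xr: "1 \<le> x" "x \<le> p*(a*s)" unfolding x_def by linarith+
  have dm: "(x-1) div p = j - 1" "(x-1) mod p = l j mod p" unfolding x_def using lp by simp_all
  have "shf p (a*s) c x = p*(j-1) + (l j mod p + c j) mod p + 1"
    using xr dm j1 unfolding shf_def[of p "a*s" c x] by simp
  also have "\<dots> = p*(j-1) + (c j + l j) mod p + 1" by (metis mod_add_left_eq add.commute)
  finally show "shf p (a*s) c (p*(j-1) + l j mod p + 1) = p*(j-1) + (c j + l j) mod p + 1"
    unfolding x_def .
qed

lemma set_act_om: "set_act (shf p (a*s) c) (om p \<delta> l) = om p \<delta> (\<lambda>j. c j + l j)"
  unfolding set_act_def om_def image_image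
proof (rule image_cong[OF refl])
  fix x assume "x \<in> \<delta> \<times> {..<p}"
  then obtain D k where x: "x = (D,k)" "D \<in> \<delta>" by auto
  show "shf p (a*s) c ` (case x of (D, k) \<Rightarrow> Al p (\<lambda>j. l j + k) D)
       = (case x of (D, k) \<Rightarrow> Al p (\<lambda>j. c j + l j + k) D)"
    using shf_Al[OF x(2)] unfolding x by (simp add: add.assoc)
qed

lemma om_sub: assumes R: "RelB p \<delta> l l'" shows "om p \<delta> l \<subseteq> om p \<delta> l'"
proof
  fix B assume "B \<in> om p \<delta> l"
  then obtain D m where D: "D \<in> \<delta>" and m: "m < p" and B: "B = Al p (\<lambda>j. l j + m) D"
    unfolding om_def by auto
  obtain k where k: "\<forall>j\<in>D. l j mod p = (l' j + k) mod p" using R D unfolding RelB_def by blast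
  have "Al p (\<lambda>j. l j + m) D = Al p (\<lambda>j. l' j + (k+m) mod p) D"
    unfolding Al_def
  proof (rule image_cong[OF refl])
    fix j assume "j \<in> D"
    then have "(l j + m) mod p = (l' j + k + m) mod p" by (rule mod_add_cong_l[OF k[rule_format]])
    also have "\<dots> = (l' j + (k+m) mod p) mod p" by (metis mod_add_right_eq add.assoc)
    finally show "p*(j-1) + (l j + m) mod p + 1 = p*(j-1) + (l' j + (k+m) mod p) mod p + 1" by simp
  qed
  moreover have "(k+m) mod p < p" using p by simp
  ultimately show "B \<in> om p \<delta> l'" unfolding om_def B
    by (intro image_eqI[where x="(D, (k+m) mod p)"]) (use D in auto)
qed

lemma om_eq_iff: "om p \<delta> l = om p \<delta> l' \<longleftrightarrow> RelB p \<delta> l l'"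
proof
  assume R: "RelB p \<delta> l l'"
  show "om p \<delta> l = om p \<delta> l'" by (rule equalityI[OF om_sub[OF R] om_sub[OF RelB_sym[OF p R]]])
next
  assume e: "om p \<delta> l = om p \<delta> l'"
  show "RelB p \<delta> l l'" unfolding RelB_def
  proof
    fix D assume D: "D \<in> \<delta>"
    have "Al p (\<lambda>j. l j + 0) D \<in> om p \<delta> l" unfolding om_def
      by (intro image_eqI[where x="(D, 0)"]) (use D p in auto)
    then have "Al p l D \<in> om p \<delta> l'" using e by simp
    then obtain x where "x \<in> \<delta> \<times> {..<p}" and ex: "Al p l D = (\<lambda>(D,k). Al p (\<lambda>j. l' j + k) D) x"
      unfolding om_def by (rule imageE)
    then obtain D' k where D': "D' \<in> \<delta>" and eq: "Al p l D = Al p (\<lambda>j. l' j + k) D'"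
      by (cases x) auto
    have mem: "j \<in> D' \<and> l j mod p = (l' j + k) mod p" if j: "j \<in> D" for j
    proof -
      have j1: "1 \<le> j" using D_sub[OF D] j by auto
      have "p*(j-1) + l j mod p + 1 \<in> Al p l D" using j unfolding Al_def by blast
      then have "p*(j-1) + l j mod p + 1 \<in> Al p (\<lambda>j. l' j + k) D'" unfolding eq .
      moreover have "l j mod p < p" using p by simp
      ultimately show ?thesis using Al_mem[OF D' j1] by blast
    qed
    show "\<exists>k. \<forall>j\<in>D. l j mod p = (l' j + k) mod p" using mem by blast
  qed
qed

lemma sigma_pow: "sigma p a s ^^ k = shf p (a*s) (\<lambda>_. k)"
  using sigma_shf[OF p, of a s] shf_pow[OF p] by simp

lemma Rgrp_shf: "Rgrp p a s = range (\<lambda>k. shf p (a*s) (\<lambda>_. k))"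
  unfolding Rgrp_def sigma_pow ..

lemma Al_elem: assumes D: "D \<in> \<delta>" and x: "x \<in> Al p l D"
  obtains j where "j \<in> D" "x = p*(j-1) + l j mod p + 1" "1 \<le> j" "j \<le> a*s"
    "1 \<le> x" "x \<le> p*(a*s)" "(x-1) div p = j - 1" "(x-1) mod p = l j mod p"
proof -
  obtain j where j: "j \<in> D" and xe: "x = p*(j-1) + l j mod p + 1" using x unfolding Al_def by blast
  have j1: "1 \<le> j" "j \<le> a*s" using D_sub[OF D] j by auto
  have "p*(j-1) + p = p*j" using j1 by (cases j) auto
  also have "\<dots> \<le> p*(a*s)" using j1 by simp
  finally have b: "p*(j-1) + p \<le> p*(a*s)" .
  have lp: "l j mod p < p" using p by simp
  have x1: "1 \<le> x" "x \<le> p*(a*s)" using b lp xe by linarith+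
  have x2: "(x-1) div p = j - 1" "(x-1) mod p = l j mod p" using lp xe by simp_all
  show ?thesis by (rule that[OF j xe j1(1) j1(2) x1(1) x1(2) x2(1) x2(2)])
qed

lemma card_Al: assumes D: "D \<in> \<delta>" shows "card (Al p l D) = card D"
  unfolding Al_def
proof (rule card_image, rule inj_onI)
  fix i j assume i: "i \<in> D" and j: "j \<in> D" and e: "p*(i-1) + l i mod p + 1 = p*(j-1) + l j mod p + 1"
  have "1 \<le> i" "1 \<le> j" using D_sub[OF D] i j by auto
  then show "i = j" using decode[OF _ _ _ _ e] p by simp
qed

lemma Al_inj: assumes D: "D \<in> \<delta>" and D': "D' \<in> \<delta>" and k: "k < p" and k': "k' < p"
  and x: "x \<in> Al p (\<lambda>j. l j + k) D" and x': "x \<in> Al p (\<lambda>j. l j + k') D'"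
  shows "D = D' \<and> k = k'"
proof -
  obtain j where j: "j \<in> D" "x = p*(j-1) + (l j + k) mod p + 1" "1 \<le> j"
    using Al_elem[OF D x] by blast
  have lt: "(l j + k) mod p < p" using p by simp
  have m: "p*(j-1) + (l j + k) mod p + 1 \<in> Al p (\<lambda>j. l j + k') D'" using x' j(2) by simp
  have "j \<in> D' \<and> (l j + k) mod p = (l j + k') mod p" using Al_mem[OF D' j(3) lt m] by simp
  then have "D = D'" "k mod p = k' mod p" using part_uniq[OF P D D' j(1)] mod_cancel[OF p, of "l j" k k'] by blast+
  then show ?thesis using k k' by simp
qed

lemma om_alt: "om p \<delta> l = {(sigma p a s ^^ k) ` Al p l D | D k. D \<in> \<delta> \<and> k < p}"
unfolding sigma_pow om_def
proof (intro equalityI subsetI)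
  fix B assume "B \<in> (\<lambda>(D, k). Al p (\<lambda>j. l j + k) D) ` (\<delta> \<times> {..<p})"
  then obtain D k where B: "B = Al p (\<lambda>j. l j + k) D" "D \<in> \<delta>" "k < p" by auto
  then have "B = shf p (a*s) (\<lambda>_. k) ` Al p l D" using shf_Al[OF B(2)] by (simp add: add.commute)
  then show "B \<in> {shf p (a*s) (\<lambda>_. k) ` Al p l D | D k. D \<in> \<delta> \<and> k < p}" using B by blast
next
  fix B assume "B \<in> {shf p (a*s) (\<lambda>_. k) ` Al p l D | D k. D \<in> \<delta> \<and> k < p}"
  then obtain D k where B: "B = shf p (a*s) (\<lambda>_. k) ` Al p l D" "D \<in> \<delta>" "k < p" by auto
  then have "B = Al p (\<lambda>j. l j + k) D" using shf_Al[OF B(2)] by (simp add: add.commute)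
  then show "B \<in> (\<lambda>(D, k). Al p (\<lambda>j. l j + k) D) ` (\<delta> \<times> {..<p})" using B by force
qed

context
  assumes cD: "\<forall>D\<in>\<delta>. card D = a" and cd: "card \<delta> = s"
begin

lemma om_in_X: "om p \<delta> l \<in> Xdelta p a s \<delta>"
proof -
  let ?f = "\<lambda>(D,k). Al p (\<lambda>j. l j + k) D"
  have fin: "finite \<delta>" using finite_elements[OF _ P] by simp
  have un: "\<Union> (om p \<delta> l) = {1..a*s*p}"
  proof
    show "\<Union> (om p \<delta> l) \<subseteq> {1..a*s*p}"
    proof
      fix x assume "x \<in> \<Union> (om p \<delta> l)"
      then obtain D k where D: "D \<in> \<delta>" and x: "x \<in> Al p (\<lambda>j. l j + k) D" unfolding om_def by auto
      show "x \<in> {1..a*s*p}" using Al_elem[OF D x] by (auto simp: mult.commute)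
    qed
  next
    show "{1..a*s*p} \<subseteq> \<Union> (om p \<delta> l)"
    proof
      fix x assume x: "x \<in> {1..a*s*p}"
      define j where "j = (x-1) div p + 1"
      define r where "r = (x-1) mod p"
      have j: "j \<in> {1..a*s}" using range_div[OF p, of x "a*s"] x unfolding j_def by (auto simp: mult.commute)
      have r: "r < p" using p unfolding r_def by simp
      define D where "D = blk \<delta> j"
      have D: "D \<in> \<delta>" "j \<in> D" using blk_in[OF P j] unfolding D_def by auto
      define k where "k = (r + p - l j mod p) mod p"
      have k: "k < p" using p unfolding k_def by simp
      have "(l j + k) mod p = r" unfolding k_def by (rule mod_fill[OF p r])
      then have "x = p*(j-1) + (l j + k) mod p + 1" using x unfolding j_def r_def by simp
      then have "x \<in> Al p (\<lambda>j. l j + k) D" unfolding Al_def using D by blast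
      moreover have "Al p (\<lambda>j. l j + k) D \<in> om p \<delta> l" unfolding om_def
        by (rule image_eqI[where x="(D,k)"]) (use D k in auto)
      ultimately show "x \<in> \<Union> (om p \<delta> l)" by blast
    qed
  qed
  have ne: "{} \<notin> om p \<delta> l"
  proof
    assume "{} \<in> om p \<delta> l"
    then obtain D k where D: "D \<in> \<delta>" and e: "{} = Al p (\<lambda>j. l j + k) D" unfolding om_def by auto
    then show False using D_ne[OF D] unfolding Al_def by auto
  qed
  have dj: "disjoint (om p \<delta> l)"
  proof (rule disjointI)
    fix A B assume A: "A \<in> om p \<delta> l" and B: "B \<in> om p \<delta> l" and ne: "A \<noteq> B"
    obtain D k where D: "D \<in> \<delta>" "k < p" and Ae: "A = Al p (\<lambda>j. l j + k) D" using A unfolding om_def by auto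
    obtain D' k' where D': "D' \<in> \<delta>" "k' < p" and Be: "B = Al p (\<lambda>j. l j + k') D'" using B unfolding om_def by auto
    show "A \<inter> B = {}"
    proof (rule ccontr)
      assume "A \<inter> B \<noteq> {}"
      then obtain x where "x \<in> A" "x \<in> B" by blast
      then have "D = D' \<and> k = k'" using Al_inj[OF D(1) D'(1) D(2) D'(2)] Ae Be by blast
      then show False using ne Ae Be by simp
    qed
  qed
  have inj: "inj_on ?f (\<delta> \<times> {..<p})"
  proof (rule inj_onI)
    fix u v assume u: "u \<in> \<delta> \<times> {..<p}" and v: "v \<in> \<delta> \<times> {..<p}" and e: "?f u = ?f v"
    obtain D k where u': "u = (D,k)" "D \<in> \<delta>" "k < p" using u by auto
    obtain D' k' where v': "v = (D',k')" "D' \<in> \<delta>" "k' < p" using v by auto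
    obtain x where "x \<in> D" using D_ne[OF u'(2)] by blast
    then have "p*(x-1) + (l x + k) mod p + 1 \<in> Al p (\<lambda>j. l j + k) D" unfolding Al_def by blast
    moreover have "Al p (\<lambda>j. l j + k) D = Al p (\<lambda>j. l j + k') D'" using e u' v' by simp
    ultimately have "D = D' \<and> k = k'" using Al_inj[OF u'(2) v'(2) u'(3) v'(3)] by blast
    then show "u = v" using u' v' by simp
  qed
  have card: "card (om p \<delta> l) = s*p"
    unfolding om_def using card_image[OF inj] cd by (simp add: card_cartesian_product)
  have cardB: "\<forall>B\<in>om p \<delta> l. card B = a"
    unfolding om_def using card_Al cD by auto
  have sp: "om p \<delta> l \<in> setparts (a*s*p) (s*p) a"
    unfolding setparts_def partition_on_def using un ne dj card cardB by blast
  have fx: "fixedR p a s (om p \<delta> l)"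
    unfolding fixedR_def Rgrp_shf
  proof
    fix r assume "r \<in> range (\<lambda>k. shf p (a*s) (\<lambda>_. k))"
    then obtain k where r: "r = shf p (a*s) (\<lambda>_. k)" by blast
    have "RelB p \<delta> (\<lambda>j. k + l j) l" unfolding RelB_def by (auto simp: add.commute)
    then show "set_act r (om p \<delta> l) = om p \<delta> l" unfolding r set_act_om om_eq_iff .
  qed
  have ht: "has_type p a s \<delta> (om p \<delta> l)"
    unfolding has_type_def
  proof (intro exI conjI)
    show "\<forall>D\<in>\<delta>. \<forall>j\<in>{1..a*s}. card (Al p l D \<inter> Orb p j) = (if j \<in> D then 1 else 0)"
    proof (intro ballI)
      fix D j assume D: "D \<in> \<delta>" and j: "j \<in> {1..a*s}"
      have "Al p l D \<inter> Orb p j = (if j \<in> D then {p*(j-1) + l j mod p + 1} else {})"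
      proof (intro equalityI subsetI)
        fix x assume "x \<in> Al p l D \<inter> Orb p j"
        then have x: "x \<in> Al p l D" "x \<in> Orb p j" by auto
        obtain i where i: "i \<in> D" "x = p*(i-1) + l i mod p + 1" "1 \<le> i" "(x-1) div p = i - 1"
          using Al_elem[OF D x(1)] by metis
        have jj: "1 \<le> j" using j by simp
        have "(x-1) div p = j - 1" using x(2) Orb_iff[OF p, of j x] j by auto
        then have "j - 1 = i - 1" using i(4) by simp
        then have "i = j" using jj i(3) by linarith
        then show "x \<in> (if j \<in> D then {p*(j-1) + l j mod p + 1} else {})" using i by simp
      next
        fix x assume x: "x \<in> (if j \<in> D then {p*(j-1) + l j mod p + 1} else {})"
        then have jD: "j \<in> D" and xe: "x = p*(j-1) + l j mod p + 1" by (auto split: if_splits)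
        have "x \<in> Al p l D" using jD xe unfolding Al_def by blast
        moreover have "l j mod p < p" using p by simp
        then have "x \<in> Orb p j" using Orb_iff[OF p, of j x] j xe by simp
        ultimately show "x \<in> Al p l D \<inter> Orb p j" by blast
      qed
      then show "card (Al p l D \<inter> Orb p j) = (if j \<in> D then 1 else 0)" by simp
    qed
    show "om p \<delta> l = {(sigma p a s ^^ k) ` Al p l D | D k. D \<in> \<delta> \<and> k < p}"
      by (rule om_alt)
  qed
  show ?thesis unfolding Xdelta_def using sp fx ht by blast
qed

lemma X_sub_om: assumes w: "\<omega> \<in> Xdelta p a s \<delta>" shows "\<exists>l. \<omega> = om p \<delta> l"
proof -
  have sp: "\<omega> \<in> setparts (a*s*p) (s*p) a" and ht: "has_type p a s \<delta> \<omega>"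
    using w unfolding Xdelta_def by auto
  have un: "\<Union>\<omega> = {1..p*(a*s)}" using sp unfolding setparts_def partition_on_def by (auto simp: mult.commute)
  obtain A where A1: "\<forall>D\<in>\<delta>. \<forall>j\<in>{1..a*s}. card (A D \<inter> Orb p j) = (if j \<in> D then 1 else 0)"
    and A2: "\<omega> = {(sigma p a s ^^ k) ` A D | D k. D \<in> \<delta> \<and> k < p}"
    using ht unfolding has_type_def by blast
  have sub: "A D \<subseteq> {1..p*(a*s)}" if D: "D \<in> \<delta>" for D
  proof -
    have "(sigma p a s ^^ 0) ` A D \<in> \<omega>" unfolding A2 using D p by blast
    then have "A D \<in> \<omega>" by simp
    then show ?thesis using un by blast
  qed
  have perD: "\<exists>l. A D = Al p l D" if D: "D \<in> \<delta>" for D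
  proof -
    have "\<forall>j\<in>D. \<exists>x. A D \<inter> Orb p j = {x}"
    proof
      fix j assume j: "j \<in> D"
      then have "j \<in> {1..a*s}" using D_sub[OF D] by blast
      then have "card (A D \<inter> Orb p j) = 1" using A1 D j by simp
      then show "\<exists>x. A D \<inter> Orb p j = {x}" by (rule card_1_singletonE) blast
    qed
    then obtain X where X: "\<forall>j\<in>D. A D \<inter> Orb p j = {X j}" by metis
    define l where "l j = (X j - 1) mod p" for j
    have Xf: "X j = p*(j-1) + l j mod p + 1" if j: "j \<in> D" for j
    proof -
      have j1: "1 \<le> j" using D_sub[OF D] j by auto
      have "X j \<in> Orb p j" using X j by blast
      then have "1 \<le> X j" "(X j - 1) div p = j - 1" using Orb_iff[OF p j1] by auto
      then show ?thesis unfolding l_def by (metis decomp mod_mod_trivial)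
    qed
    have "A D = Al p l D"
    proof (intro equalityI subsetI)
      fix y assume y: "y \<in> A D"
      then have yr: "1 \<le> y" "y \<le> p*(a*s)" using sub[OF D] by auto
      define j where "j = (y-1) div p + 1"
      have j: "j \<in> {1..a*s}" using range_div[OF p yr] unfolding j_def by auto
      have yo: "y \<in> Orb p j" using Orb_iff[OF p, of j y] yr unfolding j_def by simp
      have jD: "j \<in> D"
      proof (rule ccontr)
        assume "j \<notin> D"
        then have "card (A D \<inter> Orb p j) = 0" using A1 D j by simp
        moreover have "finite (A D \<inter> Orb p j)" unfolding Orb_def by simp
        ultimately have "A D \<inter> Orb p j = {}" by simp
        then show False using y yo by blast
      qed
      then have "y = X j" using X y yo by blast
      then show "y \<in> Al p l D" using Xf[OF jD] jD unfolding Al_def by blast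
    next
      fix y assume "y \<in> Al p l D"
      then obtain j where j: "j \<in> D" and ye: "y = p*(j-1) + l j mod p + 1" unfolding Al_def by blast
      then have "y = X j" using Xf by simp
      then show "y \<in> A D" using X j by blast
    qed
    then show ?thesis by blast
  qed
  then obtain L where L: "\<forall>D\<in>\<delta>. A D = Al p (L D) D" by metis
  define l where "l j = L (blk \<delta> j) j" for j
  have AD: "A D = Al p l D" if D: "D \<in> \<delta>" for D
  proof -
    have "Al p (L D) D = Al p l D" unfolding Al_def
      by (rule image_cong[OF refl]) (simp add: l_def blk_eq[OF P D])
    then show ?thesis using L D by simp
  qed
  have "\<omega> = {(sigma p a s ^^ k) ` Al p l D | D k. D \<in> \<delta> \<and> k < p}"
    unfolding A2 using AD by blast
  then show ?thesis using om_alt by blast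
qed

lemma Qc_sub: assumes R: "RelB p \<delta> l l'" shows "Qc p (a*s) \<delta> l \<subseteq> Qc p (a*s) \<delta> l'"
proof
  obtain K where K: "\<forall>D\<in>\<delta>. \<forall>j\<in>D. l j mod p = (l' j + K D) mod p" using R unfolding RelB_def by metis
  fix h assume "h \<in> Qc p (a*s) \<delta> l"
  then obtain w where w: "w \<in> Pset p \<delta>" and h: "h = shf p (a*s) l \<circ> shf p (a*s) w" unfolding Qc_def by blast
  define w' where "w' j = w j + K (blk \<delta> j)" for j
  have w': "w' \<in> Pset p \<delta>" unfolding Pset_def
  proof (intro CollectI ballI)
    fix D i j assume D: "D \<in> \<delta>" and i: "i \<in> D" and j: "j \<in> D"
    have "w i mod p = w j mod p" using w D i j unfolding Pset_def by blast
    then have "(w i + K D) mod p = (w j + K D) mod p" by (rule mod_add_cong_l)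
    then show "w' i mod p = w' j mod p" unfolding w'_def using blk_eq[OF P D i] blk_eq[OF P D j] by simp
  qed
  have "shf p (a*s) (\<lambda>i. l i + w i) = shf p (a*s) (\<lambda>i. l' i + w' i)"
  proof (subst shf_eq_iff[OF p], intro ballI)
    fix j assume j: "j \<in> {1..a*s}"
    have D: "blk \<delta> j \<in> \<delta>" "j \<in> blk \<delta> j" using blk_in[OF P j] by auto
    have "l j mod p = (l' j + K (blk \<delta> j)) mod p" using K D by blast
    then have "(l j + w j) mod p = (l' j + K (blk \<delta> j) + w j) mod p" by (rule mod_add_cong_l)
    then show "(l j + w j) mod p = (l' j + w' j) mod p" unfolding w'_def by (simp add: ac_simps)
  qed
  then have "h = shf p (a*s) l' \<circ> shf p (a*s) w'" unfolding h shf_comp[OF p] .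
  then show "h \<in> Qc p (a*s) \<delta> l'" unfolding Qc_def using w' by blast
qed

lemma Qc_eq_iff: "Qc p (a*s) \<delta> l = Qc p (a*s) \<delta> l' \<longleftrightarrow> RelB p \<delta> l l'"
proof
  assume R: "RelB p \<delta> l l'"
  show "Qc p (a*s) \<delta> l = Qc p (a*s) \<delta> l'" by (rule equalityI[OF Qc_sub[OF R] Qc_sub[OF RelB_sym[OF p R]]])
next
  assume e: "Qc p (a*s) \<delta> l = Qc p (a*s) \<delta> l'"
  have "(\<lambda>_. 0) \<in> Pset p \<delta>" unfolding Pset_def by simp
  then have "shf p (a*s) l \<circ> shf p (a*s) (\<lambda>_. 0) \<in> Qc p (a*s) \<delta> l" unfolding Qc_def by blast
  then have "shf p (a*s) l \<in> Qc p (a*s) \<delta> l'" using e by (simp add: shf_zero)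
  then obtain w where w: "w \<in> Pset p \<delta>" and h: "shf p (a*s) l = shf p (a*s) l' \<circ> shf p (a*s) w"
    unfolding Qc_def by blast
  have hw: "\<forall>j\<in>{1..a*s}. l j mod p = (l' j + w j) mod p"
    using h unfolding shf_comp[OF p] shf_eq_iff[OF p] .
  show "RelB p \<delta> l l'" unfolding RelB_def
  proof
    fix D assume D: "D \<in> \<delta>"
    obtain j0 where j0: "j0 \<in> D" using D_ne[OF D] by blast
    have "\<forall>j\<in>D. l j mod p = (l' j + w j0) mod p"
    proof
      fix j assume j: "j \<in> D"
      have "w j mod p = w j0 mod p" using w D j j0 unfolding Pset_def by blast
      then have "(l' j + w j) mod p = (l' j + w j0) mod p" by (rule mod_add_cong_r)
      moreover have "l j mod p = (l' j + w j) mod p" using hw D_sub[OF D] j by blast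
      ultimately show "l j mod p = (l' j + w j0) mod p" by simp
    qed
    then show "\<exists>k. \<forall>j\<in>D. l j mod p = (l' j + k) mod p" by blast
  qed
qed

lemma coset_act_Qc: "coset_act (shf p (a*s) c) (Qc p (a*s) \<delta> l) = Qc p (a*s) \<delta> (\<lambda>j. c j + l j)"
  unfolding coset_act_def Qc_def image_image
  by (simp add: o_assoc[symmetric] shf_comp[OF p] o_assoc add.assoc)

lemma cosets_Qc: "cosets (range (shf p (a*s))) (shf p (a*s) ` Pset p \<delta>) = range (Qc p (a*s) \<delta>)"
  unfolding cosets_def Qc_def by blast

lemma main_iso: "FG_iso TYPE('F::field) (range (shf p (a*s))) set_act (Xdelta p a s \<delta>)
   coset_act (cosets (range (shf p (a*s))) (shf p (a*s) ` Pset p \<delta>))"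
  unfolding cosets_Qc
proof (rule FG_iso_param[where A=UNIV and F="om p \<delta>"])
  show "Xdelta p a s \<delta> = range (om p \<delta>)" using om_in_X X_sub_om by blast
  show "range (Qc p (a*s) \<delta>) = range (Qc p (a*s) \<delta>)" ..
  show "\<forall>x\<in>UNIV. \<forall>y\<in>UNIV. om p \<delta> x = om p \<delta> y \<longleftrightarrow> Qc p (a*s) \<delta> x = Qc p (a*s) \<delta> y"
    using om_eq_iff Qc_eq_iff by simp
  show "\<forall>g\<in>range (shf p (a*s)). \<forall>x\<in>UNIV. \<exists>y\<in>UNIV. set_act g (om p \<delta> x) = om p \<delta> y \<and>
      coset_act g (Qc p (a*s) \<delta> x) = Qc p (a*s) \<delta> y"
    using set_act_om coset_act_Qc by blast
qed

lemma exists_g: "\<exists>g\<in>Normaliser p a s. conjg g (Egrp p a s) = shf p (a*s) ` Pset p \<delta>"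
proof -
  obtain \<tau> where t1: "\<tau> ` {1..a*s} \<subseteq> {1..a*s}" and t2: "inj_on \<tau> {1..a*s}"
    and t3: "\<forall>i\<in>{1..a*s}. \<forall>i'\<in>{1..a*s}. ((\<tau> i - 1) mod s = (\<tau> i' - 1) mod s \<longleftrightarrow> blk \<delta> i = blk \<delta> i')"
    using tau_exists[OF P cD cd] by blast
  define g where "g = gperm p (a*s) \<tau>"
  have perm: "g permutes {1..p*(a*s)}" unfolding g_def by (rule gperm_permutes[OF p t1 t2])
  have comm: "shf p (a*s) u \<circ> g = g \<circ> shf p (a*s) (u \<circ> \<tau>)" for u
    unfolding g_def by (rule gperm_comm[OF p t1])
  have ig: "inv g \<circ> g = id" "g \<circ> inv g = id" using permutes_inv_o[OF perm] by auto
  have conj: "inv g \<circ> shf p (a*s) u \<circ> g = shf p (a*s) (u \<circ> \<tau>)" for u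
  proof -
    have "inv g \<circ> shf p (a*s) u \<circ> g = inv g \<circ> (shf p (a*s) u \<circ> g)" by (simp add: o_assoc)
    also have "\<dots> = (inv g \<circ> g) \<circ> shf p (a*s) (u \<circ> \<tau>)" unfolding comm by (simp add: o_assoc)
    finally show ?thesis using ig by simp
  qed
  have fixc: "g \<circ> x \<circ> inv g = x" if x: "x \<in> Rgrp p a s" for x
  proof -
    obtain k where xk: "x = shf p (a*s) (\<lambda>_. k)" using x unfolding Rgrp_shf by blast
    have "(\<lambda>_. k) \<circ> \<tau> = (\<lambda>_. k)" by (simp add: comp_def)
    then have c: "x \<circ> g = g \<circ> x" using comm[of "\<lambda>_. k"] unfolding xk by simp
    have "g \<circ> x \<circ> inv g = (x \<circ> g) \<circ> inv g" using c by simp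
    also have "\<dots> = x \<circ> (g \<circ> inv g)" by (simp add: o_assoc)
    finally show ?thesis using ig by simp
  qed
  have "(\<lambda>x. g \<circ> x \<circ> inv g) ` Rgrp p a s = (\<lambda>x. x) ` Rgrp p a s"
    by (rule image_cong[OF refl]) (rule fixc)
  moreover have "g permutes {1..a*s*p}" using perm by (simp add: ac_simps)
  ultimately have N: "g \<in> Normaliser p a s" unfolding Normaliser_def by simp
  have E: "conjg g (Egrp p a s) = {shf p (a*s) ((\<lambda>i. k ((i-1) mod s + 1)) \<circ> \<tau>) | k. True}"
  proof -
    have s1: "{shf p (a*s) (\<lambda>i. k ((i-1) mod s + 1)) | k. True} = range (\<lambda>k. shf p (a*s) (\<lambda>i. k ((i-1) mod s + 1)))"
      by blast
    have s2: "{shf p (a*s) ((\<lambda>i. k ((i-1) mod s + 1)) \<circ> \<tau>) | k. True} = range (\<lambda>k. shf p (a*s) ((\<lambda>i. k ((i-1) mod s + 1)) \<circ> \<tau>))"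
      by blast
    show ?thesis unfolding conjg_def Egrp_shf[OF p] s1 s2 image_image conj ..
  qed
  have "conjg g (Egrp p a s) = shf p (a*s) ` Pset p \<delta>"
    unfolding E
  proof (intro equalityI subsetI)
    fix x assume "x \<in> {shf p (a*s) ((\<lambda>i. k ((i-1) mod s + 1)) \<circ> \<tau>) | k. True}"
    then obtain k where x: "x = shf p (a*s) ((\<lambda>i. k ((i-1) mod s + 1)) \<circ> \<tau>)" by blast
    have "(\<lambda>i. k ((i-1) mod s + 1)) \<circ> \<tau> \<in> Pset p \<delta>" unfolding Pset_def
    proof (intro CollectI ballI)
      fix D i j assume D: "D \<in> \<delta>" and i: "i \<in> D" and j: "j \<in> D"
      have ij: "i \<in> {1..a*s}" "j \<in> {1..a*s}" using D_sub[OF D] i j by auto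
      have "blk \<delta> i = blk \<delta> j" using blk_eq[OF P D i] blk_eq[OF P D j] by simp
      then have "(\<tau> i - 1) mod s = (\<tau> j - 1) mod s" using t3 ij by blast
      then show "((\<lambda>i. k ((i-1) mod s + 1)) \<circ> \<tau>) i mod p = ((\<lambda>i. k ((i-1) mod s + 1)) \<circ> \<tau>) j mod p"
        by simp
    qed
    then show "x \<in> shf p (a*s) ` Pset p \<delta>" unfolding x by blast
  next
    fix x assume "x \<in> shf p (a*s) ` Pset p \<delta>"
    then obtain u where u: "u \<in> Pset p \<delta>" and x: "x = shf p (a*s) u" by blast
    define k where "k m = u (SOME i. i \<in> {1..a*s} \<and> (\<tau> i - 1) mod s + 1 = m)" for m
    have "shf p (a*s) u = shf p (a*s) ((\<lambda>i. k ((i-1) mod s + 1)) \<circ> \<tau>)"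
    proof (subst shf_eq_iff[OF p], intro ballI)
      fix i assume i: "i \<in> {1..a*s}"
      define i' where "i' = (SOME i'. i' \<in> {1..a*s} \<and> (\<tau> i' - 1) mod s + 1 = (\<tau> i - 1) mod s + 1)"
      have "\<exists>i'. i' \<in> {1..a*s} \<and> (\<tau> i' - 1) mod s + 1 = (\<tau> i - 1) mod s + 1" using i by blast
      then have "i' \<in> {1..a*s} \<and> (\<tau> i' - 1) mod s + 1 = (\<tau> i - 1) mod s + 1"
        unfolding i'_def by (rule someI_ex)
      then have i': "i' \<in> {1..a*s}" "(\<tau> i' - 1) mod s + 1 = (\<tau> i - 1) mod s + 1" by auto
      then have "blk \<delta> i' = blk \<delta> i" using t3 i by simp
      then have "blk \<delta> i \<in> \<delta>" "i \<in> blk \<delta> i" "i' \<in> blk \<delta> i" using blk_in[OF P i] blk_in[OF P i'(1)] by auto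
      then have "u i' mod p = u i mod p" using u unfolding Pset_def by blast
      moreover have "((\<lambda>i. k ((i-1) mod s + 1)) \<circ> \<tau>) i = u i'" unfolding k_def i'_def by simp
      ultimately show "u i mod p = ((\<lambda>i. k ((i-1) mod s + 1)) \<circ> \<tau>) i mod p" by simp
    qed
    then show "x \<in> {shf p (a*s) ((\<lambda>i. k ((i-1) mod s + 1)) \<circ> \<tau>) | k. True}" unfolding x by blast
  qed
  then show ?thesis using N by blast
qed

end

end

theorem proposition3p5:
  fixes p a s :: nat and \<delta> :: "nat set set"
  assumes "prime p" and "odd p" and "CHAR('F::field) = p" and "a < p"
    and "partition_on {1..a*s} \<delta>" and "\<forall>D\<in>\<delta>. card D = a" and "card \<delta> = s"
  shows "\<exists>g\<in>Normaliser p a s.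
           conjg g (Egrp p a s) \<subseteq> Cgrp p a s \<and>
           FG_iso TYPE('F) (Cgrp p a s) set_act (Xdelta p a s \<delta>)
                  coset_act (cosets (Cgrp p a s) (conjg g (Egrp p a s)))"
proof -
  have p: "0 < p" using assms(1) prime_gt_0_nat by blast
  obtain g where g: "g \<in> Normaliser p a s" and e: "conjg g (Egrp p a s) = shf p (a*s) ` Pset p \<delta>"
    using exists_g[OF p assms(5) assms(6) assms(7)] by blast
  have "FG_iso TYPE('F) (Cgrp p a s) set_act (Xdelta p a s \<delta>)
                  coset_act (cosets (Cgrp p a s) (conjg g (Egrp p a s)))"
    unfolding e Cgrp_shf[OF p] by (rule main_iso[OF p assms(5) assms(6) assms(7)])
  moreover have "conjg g (Egrp p a s) \<subseteq> Cgrp p a s" unfolding e Cgrp_shf[OF p] by blast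
  ultimately show ?thesis using g by blast
qed

end
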